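(* In the Standing Setup with $R=u(X^2-vX+w)$ ($u,v,w\in\mathbb F$), for every $h\in\mathbb Z$: $$(d_{h-1}d_h+u)(d_hd_{h+1}+u)=-u\,d_h\,(e_h^2+ve_h+w).$$
   Context: Standing Setup. $\mathbb F$ is a field of characteristic not $2$ or $3$; $f,g\in\mathbb F$; $A=X^3+fX+g\in\mathbb F[X]$; $R\in\mathbb F[X]$ is a polynomial of degree at most $2$; $D=A^2+4R$; $Y$ satisfies $Y^2=D(X)$, $Z=\tfrac12(Y+A)$ and $\overline Z=\tfrac12(-Y+A)$, so $Z+\overline Z=A$ and $Z\overline Z=-R$. We are given sequences $(u_h),(v_h),(w_h),(d_h),(e_h)$ of elements of $\mathbb F$ indexed by $h\in\mathbb Z$, with all $u_h\neq0$, such that for every $h\in\mathbb Z$ the following two identities hold in $\mathbb F[X]$: (i) $A+d_h(X+e_h)+d_{h+1}(X+e_{h+1})=(X+v_h)(X^2-v_hX+w_h)$; (ii) $-u_hu_{h+1}(X^2-v_hX+w_h)(X^2-v_{h+1}X+w_{h+1})=d_{h+1}^2(X+e_{h+1})^2+d_{h+1}(X+e_{h+1})A-R$. (These say that $Z_h=\bigl(Z+d_h(X+e_h)\bigr)/\bigl(u_h(X^2-v_hX+w_h)\bigr)$ are consecutive complete quotients of a continued fraction expansion with partial quotients $(X+v_h)/u_h$.) *)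

theory Defs
  imports "HOL-Computational_Algebra.Polynomial"
begin

end

theory Submission
  imports Defs
begin

theorem mainTheorem6:
  fixes f g u0 v0 w0 :: "'a :: field"
    and u v w d e :: "int \<Rightarrow> 'a"
    and A R :: "'a poly"
  assumes char2: "(2::'a) \<noteq> 0" and char3: "(3::'a) \<noteq> 0"
    and A_def: "A = [:g, f, 0, 1:]"
    and R_def: "R = smult u0 [:w0, - v0, 1:]"
    and u_nz: "\<And>h. u h \<noteq> 0"
    and i: "\<And>h. A + smult (d h) [:e h, 1:] + smult (d (h+1)) [:e (h+1), 1:]
                 = [:v h, 1:] * [:w h, - v h, 1:]"
    and ii: "\<And>h. smult (- (u h * u (h+1))) ([:w h, - v h, 1:] * [:w (h+1), - v (h+1), 1:])
                 = smult ((d (h+1))\<^sup>2) ([:e (h+1), 1:]\<^sup>2)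
                   + smult (d (h+1)) [:e (h+1), 1:] * A - R"
  shows "(d (h-1) * d h + u0) * (d h * d (h+1) + u0)
           = - u0 * d h * ((e h)\<^sup>2 + v0 * e h + w0)"
proof -
  have ii': "smult (- (u (h-1) * u h)) ([:w (h-1), - v (h-1), 1:] * [:w h, - v h, 1:])
                 = smult ((d h)\<^sup>2) ([:e h, 1:]\<^sup>2)
                   + smult (d h) [:e h, 1:] * A - R"
    using ii[of "h-1"] by simp
  have i': "A + smult (d (h-1)) [:e (h-1), 1:] + smult (d h) [:e h, 1:]
                 = [:v (h-1), 1:] * [:w (h-1), - v (h-1), 1:]"
    using i[of "h-1"] by simp
  have F1: "d h = - (u (h-1) * u h)"
    using arg_cong[OF ii', of "\<lambda>p. coeff p 4"] by (simp add: A_def R_def power2_eq_square numeral_eq_Suc)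
  have dnz: "d h \<noteq> 0" using F1 u_nz by simp
  have F3raw: "coeff (smult (- (u (h-1) * u h)) ([:w (h-1), - v (h-1), 1:] * [:w h, - v h, 1:])) 3 =
     coeff (smult ((d h)\<^sup>2) ([:e h, 1:]\<^sup>2) + smult (d h) [:e h, 1:] * A - R) 3"
    using ii' by simp
  have F2': "d h * (- v (h-1) - v h) = d h * e h"
    using F3raw F1 by (simp add: A_def R_def power2_eq_square numeral_eq_Suc algebra_simps)
  have F2'': "d h * e h = d h * (- (v h + v (h-1)))" using F2' by algebra
  have F2: "e h = - (v h + v (h-1))" using F2'' dnz by simp
  have F3: "d h * (w (h-1) + w h + v (h-1) * v h) = (d h)^2 + d h * f - u0"
    using arg_cong[OF ii', of "\<lambda>p. coeff p 2"] F1
    by (simp add: A_def R_def power2_eq_square numeral_eq_Suc algebra_simps)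
  have F4: "f + d (h-1) + d h = w (h-1) - (v (h-1))^2"
    using arg_cong[OF i', of "\<lambda>p. coeff p 1"]
    by (simp add: A_def power2_eq_square algebra_simps)
  have F5: "f + d h + d (h+1) = w h - (v h)^2"
    using arg_cong[OF i[of h], of "\<lambda>p. coeff p 1"]
    by (simp add: A_def power2_eq_square algebra_simps)
  have F6: "d h * (e h ^2 + v (h-1) * e h + w (h-1)) * (e h ^2 + v h * e h + w h)
       = - u0 * ((e h)\<^sup>2 + v0 * e h + w0)"
    using arg_cong[OF ii', of "\<lambda>p. poly p (- e h)"] F1
    by (simp add: A_def R_def power2_eq_square algebra_simps)
  have Ab: "d h * (e h ^2 + v h * e h + w h) = - (d (h-1) * d h + u0)"
    using F3 F4 unfolding F2 by algebra
  have Aa: "d h * (e h ^2 + v (h-1) * e h + w (h-1)) = - (d h * d (h+1) + u0)"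
    using F3 F5 unfolding F2 by algebra
  show ?thesis
  proof -
    have "(d (h-1) * d h + u0) * (d h * d (h+1) + u0)
        = d h * (d h * (e h ^2 + v (h-1) * e h + w (h-1)) * (e h ^2 + v h * e h + w h))"
      using Aa Ab by algebra
    also have "\<dots> = - u0 * d h * ((e h)\<^sup>2 + v0 * e h + w0)" using F6 by simp
    finally show ?thesis .
  qed
qed

end
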